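(* Let $A$ be a real $2\times 2$ matrix and $B$ a real $1\times 2$ matrix, and let $\mathrm{NT}=\{\vec{x}\in\mathbb{R}^2 : BA^k\vec{x}>0 \text{ for all integers } k\ge 0\}$. If the topological boundary $\partial\mathrm{NT}$ is composed of two rays $l_1=\{k\vec{v}_1:k\ge 0\}$ and $l_2=\{k\vec{v}_2:k\ge0\}$ starting from the origin (with $\vec{v}_1,\vec{v}_2$ nonzero and not positive multiples of each other), then $l_1$ or $l_2$ is contained in the line $\{\vec{x}: B\vec{x}=0\}$.
   Context: $\mathrm{NT}$ is the non-termination set of the loop "while $(B\vec{x}>0)$ $\{\vec{x}:=A\vec{x}\}$". *)

theory Defs
  imports "HOL-Analysis.Analysis"
begin

primrec mpow :: "real^2^2 \<Rightarrow> nat \<Rightarrow> real^2^2" where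
  "mpow A 0 = mat 1"
| "mpow A (Suc k) = A ** mpow A k"

text \<open>Non-termination set of the loop  while (B x > 0) { x := A x },
  where the 1x2 matrix B is represented by its single row b, so that B x = b \<bullet> x.\<close>
definition NT :: "real^2^2 \<Rightarrow> real^2 \<Rightarrow> (real^2) set" where
  "NT A b = {x. \<forall>k::nat. b \<bullet> (mpow A k *v x) > 0}"

definition ray :: "real^2 \<Rightarrow> (real^2) set" where
  "ray v = {k *\<^sub>R v | k. k \<ge> 0}"

end

theory Submission
  imports Defs
begin

lemma mpow_comm: "mpow A (Suc k) = mpow A k ** A"
proof (induction k)
  case 0
  then show ?case by (simp add: matrix_mul_rid matrix_mul_lid)
next
  case (Suc k)
  have "mpow A (Suc (Suc k)) = A ** (mpow A k ** A)" using Suc by simp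
  also have "\<dots> = mpow A (Suc k) ** A" by (simp add: matrix_mul_assoc)
  finally show ?case .
qed

lemma mpow_Suc': "mpow A (Suc k) *v x = mpow A k *v (A *v x)"
  by (simp only: mpow_comm matrix_vector_mul_assoc)

lemma mpow_Suc2: "mpow A (Suc k) *v x = A *v (mpow A k *v x)"
  by (simp add: matrix_vector_mul_assoc)

lemma NT_step: "x \<in> NT A b \<longleftrightarrow> b \<bullet> x > 0 \<and> A *v x \<in> NT A b"
proof
  assume h: "x \<in> NT A b"
  have "b \<bullet> (mpow A 0 *v x) > 0" using h unfolding NT_def by blast
  hence "b \<bullet> x > 0" by (simp add: matrix_vector_mul_lid)
  moreover have "A *v x \<in> NT A b"
    unfolding NT_def
  proof (safe)
    fix k
    have "b \<bullet> (mpow A (Suc k) *v x) > 0" using h unfolding NT_def by blast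
    thus "b \<bullet> (mpow A k *v (A *v x)) > 0" by (simp only: mpow_Suc')
  qed
  ultimately show "b \<bullet> x > 0 \<and> A *v x \<in> NT A b" by blast
next
  assume h: "b \<bullet> x > 0 \<and> A *v x \<in> NT A b"
  show "x \<in> NT A b" unfolding NT_def
  proof (safe)
    fix k show "b \<bullet> (mpow A k *v x) > 0"
    proof (cases k)
      case 0 then show ?thesis using h by (simp add: matrix_vector_mul_lid)
    next
      case (Suc m)
      have "b \<bullet> (mpow A m *v (A *v x)) > 0" using h unfolding NT_def by blast
      then show ?thesis using Suc by (simp only: mpow_Suc')
    qed
  qed
qed

lemma isCont_mv: "isCont (\<lambda>x. (A::real^2^2) *v x) x"
  by (simp add: linear_continuous_at matrix_vector_mul_linear)

lemma front_map:
  assumes "b \<bullet> v > 0" "v \<in> frontier (NT A b)"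
  shows "A *v v \<in> frontier (NT A b)"
proof -
  have "v \<in> closure (NT A b)" using assms(2) by (simp add: frontier_def)
  hence "A *v v \<in> (\<lambda>x. A *v x) ` closure (NT A b)" by blast
  also have "\<dots> \<subseteq> closure ((\<lambda>x. A *v x) ` NT A b)"
    by (rule continuous_image_closure_subset[where A=UNIV])
       (auto intro: continuous_at_imp_continuous_on isCont_mv)
  also have "\<dots> \<subseteq> closure (NT A b)"
  proof (rule closure_mono, rule image_subsetI)
    fix x assume "x \<in> NT A b"
    thus "A *v x \<in> NT A b" using NT_step[of x A b] by blast
  qed
  finally have c: "A *v v \<in> closure (NT A b)" .
  have "A *v v \<notin> interior (NT A b)"
  proof
    assume i: "A *v v \<in> interior (NT A b)"
    let ?U = "{x. 0 < b \<bullet> x} \<inter> (\<lambda>x. A *v x) -` interior (NT A b)"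
    have "open ?U"
      by (intro open_Int open_halfspace_gt continuous_open_vimage open_interior)
         (auto intro: isCont_mv)
    moreover have "v \<in> ?U" using i assms(1) by simp
    moreover have "?U \<subseteq> NT A b"
    proof
      fix x assume "x \<in> ?U"
      hence "0 < b \<bullet> x" "A *v x \<in> NT A b" using interior_subset by auto
      thus "x \<in> NT A b" using NT_step[of x A b] by blast
    qed
    ultimately have "v \<in> interior (NT A b)" by (meson interiorI)
    thus False using assms(2) by (simp add: frontier_def)
  qed
  thus ?thesis using c by (simp add: frontier_def)
qed

lemma empty_NT:
  assumes "\<forall>y. A *v (A *v y) = 0"
  shows "NT A b = {}"
proof -
  { fix x assume "x \<in> NT A b"
    hence "b \<bullet> (mpow A 2 *v x) > 0" unfolding NT_def by blast
    moreover have "mpow A 2 *v x = A *v (A *v x)"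
      by (simp add: numeral_2_eq_2 matrix_vector_mul_assoc[symmetric] matrix_vector_mul_lid)
    ultimately have False using assms by simp }
  thus ?thesis by blast
qed

lemma two_step_c:
  assumes "\<forall>y. A *v (A *v y) = c *\<^sub>R (A *v y)" "c > 0" "b \<bullet> x > 0" "b \<bullet> (A *v x) > 0"
  shows "x \<in> NT A b"
proof -
  have "b \<bullet> (mpow A (Suc m) *v x) > 0" for m
  proof (induction m)
    case 0 then show ?case using assms(4) by (simp add: matrix_vector_mul_lid)
  next
    case (Suc m)
    have "mpow A (Suc (Suc m)) *v x = A *v (A *v (mpow A m *v x))"
      by (simp only: mpow_Suc2)
    also have "\<dots> = c *\<^sub>R (mpow A (Suc m) *v x)" using assms(1) by (simp only: mpow_Suc2)
    finally show ?case using Suc assms(2) by simp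
  qed
  hence "b \<bullet> (mpow A k *v x) > 0" for k
    using assms(3) by (cases k) (simp_all add: matrix_vector_mul_lid del: mpow.simps(2))
  thus ?thesis unfolding NT_def by blast
qed

lemma two_step_id:
  assumes "\<forall>y. A *v (A *v y) = c *\<^sub>R y" "c > 0" "b \<bullet> x > 0" "b \<bullet> (A *v x) > 0"
  shows "x \<in> NT A b"
proof -
  have "b \<bullet> (mpow A m *v x) > 0 \<and> b \<bullet> (mpow A (Suc m) *v x) > 0" for m
  proof (induction m)
    case 0 then show ?case using assms(3,4) by (simp add: matrix_vector_mul_lid)
  next
    case (Suc m)
    have "mpow A (Suc (Suc m)) *v x = A *v (A *v (mpow A m *v x))"
      by (simp only: mpow_Suc2)
    also have "\<dots> = c *\<^sub>R (mpow A m *v x)" using assms(1) by simp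
    finally show ?case using Suc assms(2) by simp
  qed
  thus ?thesis unfolding NT_def by blast
qed

lemma interior_two:
  assumes "\<forall>x. b \<bullet> x > 0 \<and> b \<bullet> (A *v x) > 0 \<longrightarrow> x \<in> NT A b"
    "b \<bullet> v > 0" "b \<bullet> (A *v v) > 0"
  shows "v \<in> interior (NT A b)"
proof -
  let ?U = "{x. 0 < b \<bullet> x} \<inter> (\<lambda>x. A *v x) -` {x. 0 < b \<bullet> x}"
  have "open ?U"
    by (intro open_Int open_halfspace_gt continuous_open_vimage)
       (auto intro: isCont_mv)
  moreover have "v \<in> ?U" using assms by simp
  moreover have "?U \<subseteq> NT A b" using assms(1) by auto
  ultimately show ?thesis by (meson interiorI)
qed

lemma mpow_eig: "A *v v = s *\<^sub>R v \<Longrightarrow> mpow A k *v v = (s ^ k) *\<^sub>R v"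
  by (induction k) (simp_all add: matrix_vector_mul_lid mpow_Suc2 matrix_vector_mult_scaleR del: mpow.simps(2))

lemma diag:
  assumes e1: "A *v v1 = s *\<^sub>R v1" and e2: "A *v v2 = t *\<^sub>R v2"
    and "0 \<le> t" "t \<le> s" "0 < s" and b1: "b \<bullet> v1 > 0" and b2: "b \<bullet> v2 > 0"
    and co: "\<forall>x. x = (p \<bullet> x) *\<^sub>R v1 + (q \<bullet> x) *\<^sub>R v2"
    and "p \<bullet> v1 = 1" "q \<bullet> v1 = 0"
  shows "v1 \<in> interior (NT A b)"
proof -
  define c1 where "c1 = b \<bullet> v1"
  define c2 where "c2 = b \<bullet> v2"
  let ?U = "{x. 0 < (c1 *\<^sub>R p - c2 *\<^sub>R q) \<bullet> x} \<inter> {x. 0 < (c1 *\<^sub>R p + c2 *\<^sub>R q) \<bullet> x}"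
  have "open ?U" by (intro open_Int open_halfspace_gt)
  moreover have "v1 \<in> ?U" using assms b1 by (simp add: c1_def inner_diff_left inner_add_left)
  moreover have "?U \<subseteq> NT A b"
  proof
    fix x assume xU: "x \<in> ?U"
    define \<alpha> where "\<alpha> = p \<bullet> x"
    define \<beta> where "\<beta> = q \<bullet> x"
    have h1: "c1 * \<alpha> - c2 * \<beta> > 0" "c1 * \<alpha> + c2 * \<beta> > 0"
      using xU by (auto simp: \<alpha>_def \<beta>_def inner_diff_left inner_add_left)
    have abs: "c2 * \<bar>\<beta>\<bar> < c1 * \<alpha>" using h1 by (cases "\<beta> \<ge> 0") auto
    show "x \<in> NT A b" unfolding NT_def
    proof (safe)
      fix k
      have "mpow A k *v x = mpow A k *v (\<alpha> *\<^sub>R v1 + \<beta> *\<^sub>R v2)"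
        using co \<alpha>_def \<beta>_def by metis
      also have "\<dots> = (\<alpha> * s ^ k) *\<^sub>R v1 + (\<beta> * t ^ k) *\<^sub>R v2"
        by (simp add: matrix_vector_right_distrib matrix_vector_mult_scaleR mpow_eig[OF e1] mpow_eig[OF e2])
      finally have "b \<bullet> (mpow A k *v x) = \<alpha> * s ^ k * c1 + \<beta> * t ^ k * c2"
        by (simp add: c1_def c2_def inner_add_right)
      moreover have "t ^ k \<le> s ^ k" using assms by (simp add: power_mono)
      moreover have "s ^ k > 0" using assms by simp
      moreover have "0 \<le> t ^ k" using assms by simp
      moreover have "c2 > 0" using b2 c2_def by simp
      ultimately show "b \<bullet> (mpow A k *v x) > 0"
      proof -
        assume eq: "b \<bullet> (mpow A k *v x) = \<alpha> * s ^ k * c1 + \<beta> * t ^ k * c2"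
          and tk: "t ^ k \<le> s ^ k" and sk: "s ^ k > 0" and t0: "0 \<le> t ^ k" and c2p: "c2 > 0"
        have "s ^ k * (c2 * \<bar>\<beta>\<bar>) < s ^ k * (c1 * \<alpha>)" using abs sk by simp
        moreover have "t ^ k * (c2 * \<bar>\<beta>\<bar>) \<le> s ^ k * (c2 * \<bar>\<beta>\<bar>)"
          using tk c2p by (intro mult_right_mono) auto
        moreover have "- (\<beta> * t ^ k * c2) \<le> t ^ k * (c2 * \<bar>\<beta>\<bar>)"
          using t0 c2p by (cases "\<beta> \<ge> 0") (auto simp: mult_nonneg_nonneg)
        moreover have "\<alpha> * s ^ k * c1 = s ^ k * (c1 * \<alpha>)" by (simp add: mult_ac)
        ultimately show ?thesis using eq by linarith
      qed
    qed
  qed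
  ultimately show ?thesis by (meson interiorI)
qed

lemma coords:
  fixes v1 v2 :: "real^2"
  assumes "v1$1 * v2$2 - v1$2 * v2$1 \<noteq> 0"
  shows "\<exists>p q. (\<forall>x. x = (p \<bullet> x) *\<^sub>R v1 + (q \<bullet> x) *\<^sub>R v2) \<and>
     p \<bullet> v1 = 1 \<and> p \<bullet> v2 = 0 \<and> q \<bullet> v1 = 0 \<and> q \<bullet> v2 = 1"
proof -
  define d where "d = v1$1 * v2$2 - v1$2 * v2$1"
  have d: "d \<noteq> 0" using assms d_def by simp
  define p :: "real^2" where "p = vector [v2$2/d, - v2$1/d]"
  define q :: "real^2" where "q = vector [- v1$2/d, v1$1/d]"
  have ip: "p \<bullet> x = (x$1 * v2$2 - x$2 * v2$1) / d" for x
    using d by (simp add: p_def inner_vec_def sum_2 field_simps)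
  have iq: "q \<bullet> x = (v1$1 * x$2 - v1$2 * x$1) / d" for x
    using d by (simp add: q_def inner_vec_def sum_2 field_simps)
  have "\<forall>x. x = (p \<bullet> x) *\<^sub>R v1 + (q \<bullet> x) *\<^sub>R v2"
  proof
    fix x :: "real^2"
    have c1: "((p \<bullet> x) *\<^sub>R v1 + (q \<bullet> x) *\<^sub>R v2)$1 = x$1"
    proof -
      have "((p \<bullet> x) *\<^sub>R v1 + (q \<bullet> x) *\<^sub>R v2)$1
          = ((x$1 * v2$2 - x$2 * v2$1) * v1$1 + (v1$1 * x$2 - v1$2 * x$1) * v2$1) / d"
        by (simp add: ip iq add_divide_distrib)
      also have "\<dots> = x$1 * d / d" by (simp add: d_def algebra_simps)
      also have "\<dots> = x$1" using d by simp
      finally show ?thesis .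
    qed
    have c2: "((p \<bullet> x) *\<^sub>R v1 + (q \<bullet> x) *\<^sub>R v2)$2 = x$2"
    proof -
      have "((p \<bullet> x) *\<^sub>R v1 + (q \<bullet> x) *\<^sub>R v2)$2
          = ((x$1 * v2$2 - x$2 * v2$1) * v1$2 + (v1$1 * x$2 - v1$2 * x$1) * v2$2) / d"
        by (simp add: ip iq add_divide_distrib)
      also have "\<dots> = x$2 * d / d" by (simp add: d_def algebra_simps)
      also have "\<dots> = x$2" using d by simp
      finally show ?thesis .
    qed
    show "x = (p \<bullet> x) *\<^sub>R v1 + (q \<bullet> x) *\<^sub>R v2"
      unfolding vec_eq_iff forall_2 using c1 c2 by simp
  qed
  moreover have "p \<bullet> v1 = 1 \<and> p \<bullet> v2 = 0 \<and> q \<bullet> v1 = 0 \<and> q \<bullet> v2 = 1"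
    using d unfolding ip iq by (simp add: d_def algebra_simps)
  ultimately show ?thesis by blast
qed

lemma lin2:
  fixes A :: "real^2^2" and v1 v2 :: "real^2"
  assumes co: "\<forall>x. x = (p \<bullet> x) *\<^sub>R v1 + (q \<bullet> x) *\<^sub>R v2"
  shows "A *v y = (p \<bullet> y) *\<^sub>R (A *v v1) + (q \<bullet> y) *\<^sub>R (A *v v2)"
proof -
  have e: "y = (p \<bullet> y) *\<^sub>R v1 + (q \<bullet> y) *\<^sub>R v2" using co by blast
  have "A *v y = A *v ((p \<bullet> y) *\<^sub>R v1 + (q \<bullet> y) *\<^sub>R v2)" using e by (rule arg_cong)
  thus ?thesis by (simp add: matrix_vector_right_distrib matrix_vector_mult_scaleR)
qed

lemma in_ray: "x \<in> ray v \<longleftrightarrow> (\<exists>k\<ge>0. x = k *\<^sub>R v)"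
  unfolding ray_def by blast

theorem lemma3:
  fixes A :: "real^2^2" and b :: "real^2" and v1 v2 :: "real^2"
  assumes "v1 \<noteq> 0" and "v2 \<noteq> 0"
    and "\<not> (\<exists>c>0. v1 = c *\<^sub>R v2)"
    and "frontier (NT A b) = ray v1 \<union> ray v2"
  shows "ray v1 \<subseteq> {x. b \<bullet> x = 0} \<or> ray v2 \<subseteq> {x. b \<bullet> x = 0}"
proof (rule ccontr)
  assume nc: "\<not> ?thesis"
  let ?N = "NT A b"
  have F: "frontier ?N = ray v1 \<union> ray v2" by (rule assms(4))
  have "v1 \<in> ray v1" unfolding in_ray by (rule exI[of _ 1]) simp
  hence r1: "v1 \<in> frontier ?N" using F by blast
  have "v2 \<in> ray v2" unfolding in_ray by (rule exI[of _ 1]) simp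
  hence r2: "v2 \<in> frontier ?N" using F by blast
  have "0 \<in> ray v1" unfolding in_ray by (rule exI[of _ 0]) simp
  hence z: "0 \<in> frontier ?N" using F by blast
  have sub: "?N \<subseteq> {x. 0 \<le> b \<bullet> x}"
  proof
    fix x assume "x \<in> ?N"
    hence "b \<bullet> (mpow A 0 *v x) > 0" unfolding NT_def by blast
    thus "x \<in> {x. 0 \<le> b \<bullet> x}" by (simp add: matrix_vector_mul_lid)
  qed
  have cl: "closure ?N \<subseteq> {x. 0 \<le> b \<bullet> x}"
    by (rule closure_minimal[OF sub closed_halfspace_ge])
  have fcl: "frontier ?N \<subseteq> closure ?N" by (simp add: frontier_def)
  have bv1: "b \<bullet> v1 > 0"
  proof -
    have "b \<bullet> v1 \<ge> 0" using r1 fcl cl by blast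
    moreover have "b \<bullet> v1 \<noteq> 0"
    proof
      assume "b \<bullet> v1 = 0"
      hence "ray v1 \<subseteq> {x. b \<bullet> x = 0}" by (auto simp: in_ray)
      thus False using nc by blast
    qed
    ultimately show ?thesis by simp
  qed
  have bv2: "b \<bullet> v2 > 0"
  proof -
    have "b \<bullet> v2 \<ge> 0" using r2 fcl cl by blast
    moreover have "b \<bullet> v2 \<noteq> 0"
    proof
      assume "b \<bullet> v2 = 0"
      hence "ray v2 \<subseteq> {x. b \<bullet> x = 0}" by (auto simp: in_ray)
      thus False using nc by blast
    qed
    ultimately show ?thesis by simp
  qed
  have det: "v1$1 * v2$2 - v1$2 * v2$1 \<noteq> 0"
  proof
    assume d0: "v1$1 * v2$2 - v1$2 * v2$1 = 0"
    have "\<exists>c. v1 = c *\<^sub>R v2"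
    proof (cases "v2$1 = 0")
      case False
      have "v1 = (v1$1 / v2$1) *\<^sub>R v2"
        unfolding vec_eq_iff forall_2 using False d0
        by (simp add: field_simps)
      thus ?thesis by blast
    next
      case True
      have "v2$2 \<noteq> 0" using True assms(2) by (auto simp: vec_eq_iff forall_2)
      have "v1 = (v1$2 / v2$2) *\<^sub>R v2"
        unfolding vec_eq_iff forall_2 using True \<open>v2$2 \<noteq> 0\<close> d0
        by (simp add: field_simps)
      thus ?thesis by blast
    qed
    then obtain c where c: "v1 = c *\<^sub>R v2" by blast
    have "b \<bullet> v1 = c * (b \<bullet> v2)" using c by simp
    hence "c > 0" using bv1 bv2 by (simp add: zero_less_mult_iff)
    thus False using c assms(3) by blast
  qed
  obtain p q where co: "\<forall>x. x = (p \<bullet> x) *\<^sub>R v1 + (q \<bullet> x) *\<^sub>R v2"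
    and pv1: "p \<bullet> v1 = 1" and pv2: "p \<bullet> v2 = 0" and qv1: "q \<bullet> v1 = 0" and qv2: "q \<bullet> v2 = 1"
    using coords[OF det] by blast
  have co': "\<forall>x. x = (q \<bullet> x) *\<^sub>R v2 + (p \<bullet> x) *\<^sub>R v1" using co by (metis add.commute)
  have "A *v v1 \<in> ray v1 \<union> ray v2" using front_map[OF bv1 r1] F by simp
  then obtain s where s0: "s \<ge> 0" and sd: "A *v v1 = s *\<^sub>R v1 \<or> A *v v1 = s *\<^sub>R v2"
    by (auto simp: in_ray)
  have "A *v v2 \<in> ray v1 \<union> ray v2" using front_map[OF bv2 r2] F by simp
  then obtain t where t0: "t \<ge> 0" and td: "A *v v2 = t *\<^sub>R v1 \<or> A *v v2 = t *\<^sub>R v2"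
    by (auto simp: in_ray)
  have ne: "?N \<noteq> {}" using z by auto
  have ni1: "v1 \<notin> interior ?N" using r1 by (simp add: frontier_def)
  have ni2: "v2 \<notin> interior ?N" using r2 by (simp add: frontier_def)
  have lin: "A *v y = (p \<bullet> y) *\<^sub>R (A *v v1) + (q \<bullet> y) *\<^sub>R (A *v v2)" for y
    by (rule lin2[OF co])
  have zero: False if "\<forall>y. A *v (A *v y) = 0"
    using empty_NT[OF that, of b] ne by simp
  show False
  proof (cases "A *v v1 = s *\<^sub>R v1")
    case e1: True
    show False
    proof (cases "A *v v2 = t *\<^sub>R v2")
      case e2: True
      show False
      proof (cases "t \<le> s")
        case True
        show False
        proof (cases "s = 0")
          case True
          hence "t = 0" using \<open>t \<le> s\<close> t0 by simp
          hence "A *v y = 0" for y using lin[of y] e1 e2 True by simp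
          thus False using zero by simp
        next
          case False
          hence "0 < s" using s0 by simp
          have "v1 \<in> interior ?N"
            by (rule diag[OF e1 e2 t0 \<open>t \<le> s\<close> \<open>0 < s\<close> bv1 bv2 co pv1 qv1])
          thus False using ni1 by simp
        qed
      next
        case False
        hence "s \<le> t" "0 < t" using s0 by auto
        have "v2 \<in> interior ?N"
          by (rule diag[OF e2 e1 s0 \<open>s \<le> t\<close> \<open>0 < t\<close> bv2 bv1 co' qv2 pv2])
        thus False using ni2 by simp
      qed
    next
      case False
      hence e2: "A *v v2 = t *\<^sub>R v1" using td by simp
      have AA: "A *v (A *v y) = s *\<^sub>R (A *v y)" for y
        unfolding lin[of y] lin[of "A *v y"]
        by (simp add: e1 e2 matrix_vector_right_distrib matrix_vector_mult_scaleR inner_add_right pv1 qv1 algebra_simps)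
      show False
      proof (cases "s = 0")
        case True
        thus False using AA zero by simp
      next
        case False
        hence sp: "0 < s" using s0 by simp
        have "v1 \<in> interior ?N"
          by (rule interior_two) (use two_step_c[OF allI[OF AA] sp] bv1 e1 sp in auto)
        thus False using ni1 by simp
      qed
    qed
  next
    case False
    hence e1: "A *v v1 = s *\<^sub>R v2" using sd by simp
    show False
    proof (cases "A *v v2 = t *\<^sub>R v2")
      case e2: True
      have AA: "A *v (A *v y) = t *\<^sub>R (A *v y)" for y
        unfolding lin[of y] lin[of "A *v y"]
        by (simp add: e1 e2 matrix_vector_right_distrib matrix_vector_mult_scaleR inner_add_right pv2 qv2 algebra_simps)
      show False
      proof (cases "t = 0")
        case True
        thus False using AA zero by simp
      next
        case False
        hence tp: "0 < t" using t0 by simp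
        have "v2 \<in> interior ?N"
          by (rule interior_two) (use two_step_c[OF allI[OF AA] tp] bv2 e2 tp in auto)
        thus False using ni2 by simp
      qed
    next
      case False
      hence e2: "A *v v2 = t *\<^sub>R v1" using td by simp
      have AA: "A *v (A *v y) = (s * t) *\<^sub>R y" for y
      proof -
        have "A *v (A *v y) = ((p \<bullet> y) * s * t) *\<^sub>R v1 + ((q \<bullet> y) * t * s) *\<^sub>R v2"
          unfolding lin[of y] lin[of "A *v y"]
          by (simp add: e1 e2 matrix_vector_right_distrib matrix_vector_mult_scaleR inner_add_right pv1 qv1 pv2 qv2 algebra_simps)
        also have "\<dots> = (s * t) *\<^sub>R ((p \<bullet> y) *\<^sub>R v1 + (q \<bullet> y) *\<^sub>R v2)"
          by (simp add: algebra_simps)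
        also have "\<dots> = (s * t) *\<^sub>R y" using co by metis
        finally show ?thesis .
      qed
      show False
      proof (cases "s * t = 0")
        case True
        thus False using AA zero by simp
      next
        case False
        hence sp: "0 < s * t" "0 < s" using s0 t0 by (auto simp: less_le)
        have "v1 \<in> interior ?N"
          by (rule interior_two) (use two_step_id[OF allI[OF AA] sp(1)] bv1 bv2 e1 sp in auto)
        thus False using ni1 by simp
      qed
    qed
  qed
qed

end
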